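(* Let $X$ be a compact metric space, $f:X\to X$ continuous, $n\ge1$ an integer and $x\in X$. If $\omega_f(x)\subset \mathrm{Fix}(f^n)$, then the number of connected components of $\omega_f(x)$ divides $n$.
   Context: $\mathrm{Fix}(g)$ denotes the set of fixed points of $g$, and $f^n$ is the $n$-th iterate of $f$. The $\omega$-limit set is $\omega_f(x)=\{y\in X:\ \exists\, n_i\to+\infty,\ f^{n_i}(x)\to y\}$. *)

theory Defs
  imports "HOL-Analysis.Analysis"
begin

definition Fix :: "'a set \<Rightarrow> ('a \<Rightarrow> 'a) \<Rightarrow> 'a set" where
  "Fix X g = {y \<in> X. g y = y}"

definition omega_limit :: "'a::metric_space set \<Rightarrow> ('a \<Rightarrow> 'a) \<Rightarrow> 'a \<Rightarrow> 'a set" where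
  "omega_limit X f x = {y \<in> X. \<exists>r::nat \<Rightarrow> nat. strict_mono r \<and> ((\<lambda>i. (f ^^ r i) x) \<longlonglongrightarrow> y)}"

end

theory Submission
  imports Defs
begin

lemma freq_subseq:
  fixes s :: "nat \<Rightarrow> 'a::metric_space"
  assumes "\<forall>e>0. \<forall>N. \<exists>m\<ge>N. dist (s m) y < e"
  shows "\<exists>r. strict_mono r \<and> (\<lambda>i. s (r i)) \<longlonglongrightarrow> y"
proof -
  have "\<forall>e N. \<exists>m. e > 0 \<longrightarrow> m \<ge> N \<and> dist (s m) y < e" using assms by blast
  then obtain g where g: "\<And>e N. e > 0 \<Longrightarrow> g e N \<ge> N \<and> dist (s (g e N)) y < e"
    by metis
  define r where "r = rec_nat (g 1 0) (\<lambda>i ri. g (1 / real (Suc (Suc i))) (Suc ri))"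
  have r0: "r 0 = g 1 0" and rS: "\<And>i. r (Suc i) = g (1 / real (Suc (Suc i))) (Suc (r i))"
    by (simp_all add: r_def)
  have sm: "strict_mono r"
    unfolding strict_mono_Suc_iff
  proof
    fix i show "r i < r (Suc i)" using g[of "1 / real (Suc (Suc i))" "Suc (r i)"] rS[of i] by simp
  qed
  have d: "dist (s (r i)) y < 1 / real (Suc i)" for i
  proof (cases i)
    case 0 then show ?thesis using g[of 1 0] r0 by simp
  next
    case (Suc j) then show ?thesis using g[of "1 / real (Suc (Suc j))" "Suc (r j)"] rS[of j] by simp
  qed
  have "(\<lambda>i. s (r i)) \<longlonglongrightarrow> y"
    unfolding lim_sequentially
  proof (intro allI impI)
    fix e :: real assume "e > 0"
    then obtain N where N: "inverse (real (Suc N)) < e" using reals_Archimedean[of e] by blast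
    show "\<exists>no. \<forall>n\<ge>no. dist (s (r n)) y < e"
    proof (intro exI allI impI)
      fix n assume "n \<ge> N"
      then have "1 / real (Suc n) \<le> 1 / real (Suc N)"
        by (simp add: frac_le)
      then show "dist (s (r n)) y < e" using d[of n] N by (simp add: inverse_eq_divide)
    qed
  qed
  then show ?thesis using sm by blast
qed

lemma omega_freq:
  assumes "y \<in> omega_limit X f x"
  shows "\<forall>e>0. \<forall>N. \<exists>m\<ge>N. dist ((f^^m) x) y < e"
proof (intro allI impI)
  fix e :: real and N assume "e > 0"
  from assms obtain r where r: "strict_mono r" "(\<lambda>i. (f ^^ r i) x) \<longlonglongrightarrow> y"
    unfolding omega_limit_def by blast
  then obtain M where M: "\<forall>i\<ge>M. dist ((f ^^ r i) x) y < e" using \<open>e>0\<close> unfolding lim_sequentially by blast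
  have "r (max M N) \<ge> N" using seq_suble[OF r(1), of "max M N"] by simp
  then show "\<exists>m\<ge>N. dist ((f ^^ m) x) y < e" using M by (meson max.cobounded1)
qed

lemma omega_iff:
  "y \<in> omega_limit X f x \<longleftrightarrow> y \<in> X \<and> (\<forall>e>0. \<forall>N. \<exists>m\<ge>N. dist ((f^^m) x) y < e)"
proof
  assume "y \<in> omega_limit X f x" then show "y \<in> X \<and> (\<forall>e>0. \<forall>N. \<exists>m\<ge>N. dist ((f^^m) x) y < e)"
    using omega_freq unfolding omega_limit_def by blast
next
  assume a: "y \<in> X \<and> (\<forall>e>0. \<forall>N. \<exists>m\<ge>N. dist ((f^^m) x) y < e)"
  then obtain r where "strict_mono r" "(\<lambda>i. (f ^^ r i) x) \<longlonglongrightarrow> y"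
    using freq_subseq[of "\<lambda>m. (f^^m) x" y] by blast
  then show "y \<in> omega_limit X f x" using a unfolding omega_limit_def by blast
qed

lemma omega_closed:
  assumes "closed X"
  shows "closed (omega_limit X f x)"
  unfolding closed_limpt
proof (intro allI impI)
  fix y assume y: "y islimpt omega_limit X f x"
  have "omega_limit X f x \<subseteq> X" unfolding omega_limit_def by blast
  then have "y \<in> X" using y assms closed_limpt islimpt_subset by blast
  moreover have "\<forall>e>0. \<forall>N. \<exists>m\<ge>N. dist ((f^^m) x) y < e"
  proof (intro allI impI)
    fix e :: real and N assume "e > 0"
    then obtain w where w: "w \<in> omega_limit X f x" "dist w y < e/2"
      using y unfolding islimpt_approachable by (meson half_gt_zero)
    then obtain m where "m \<ge> N" "dist ((f^^m) x) w < e/2"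
      using omega_freq[OF w(1)] \<open>e>0\<close> by (meson half_gt_zero)
    then show "\<exists>m\<ge>N. dist ((f^^m) x) y < e"
      using w(2) dist_triangle_half_l by (metis dist_commute)
  qed
  ultimately show "y \<in> omega_limit X f x" using omega_iff by blast
qed

lemma orbit_in: "x \<in> X \<Longrightarrow> f ` X \<subseteq> X \<Longrightarrow> (f^^m) x \<in> X"
  by (induction m) auto

lemma subseq_lim:
  fixes s :: "nat \<Rightarrow> 'a::metric_space" and S :: "nat set"
  assumes "compact X" "\<And>m. s m \<in> X" "infinite S"
  shows "\<exists>q l. strict_mono q \<and> (\<forall>i. q i \<in> S) \<and> l \<in> X \<and> (\<lambda>i. s (q i)) \<longlonglongrightarrow> l"
proof -
  obtain r :: "nat \<Rightarrow> nat" where r: "strict_mono r" "\<forall>n. r n \<in> S" using infinite_enumerate[OF assms(3)] by blast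
  obtain l r2 where "l \<in> X" "strict_mono r2" "((\<lambda>i. s (r i)) \<circ> r2) \<longlonglongrightarrow> l"
    using seq_compactE[OF compact_imp_seq_compact[OF assms(1)], of "\<lambda>i. s (r i)"] assms(2) by blast
  moreover have "strict_mono (r \<circ> r2)" using r(1) \<open>strict_mono r2\<close> by (simp add: strict_mono_o)
  ultimately show ?thesis using r(2) by (auto simp: o_def)
qed

lemma shift_lim:
  assumes "continuous_on X f" "f ` X \<subseteq> X" "x \<in> X" "y \<in> X"
    "(\<lambda>i. (f ^^ q i) x) \<longlonglongrightarrow> y"
  shows "(\<lambda>i. (f ^^ Suc (q i)) x) \<longlonglongrightarrow> f y"
proof -
  have "((\<lambda>z. f z) \<circ> (\<lambda>i. (f ^^ q i) x)) \<longlonglongrightarrow> f y"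
    using continuous_on_tendsto_compose[OF assms(1) assms(5) assms(4)] orbit_in[OF assms(3) assms(2)]
    by (simp add: o_def)
  then show ?thesis by (simp add: o_def)
qed

lemma omega_fw:
  assumes "continuous_on X f" "f ` X \<subseteq> X" "x \<in> X" "y \<in> omega_limit X f x"
  shows "f y \<in> omega_limit X f x"
proof -
  from assms(4) obtain r where r: "y \<in> X" "strict_mono r" "(\<lambda>i. (f ^^ r i) x) \<longlonglongrightarrow> y"
    unfolding omega_limit_def by blast
  have "(\<lambda>i. (f ^^ Suc (r i)) x) \<longlonglongrightarrow> f y" using shift_lim[OF assms(1-3) r(1,3)] .
  moreover have "strict_mono (\<lambda>i. Suc (r i))" using r(2) by (simp add: strict_mono_def)
  ultimately show ?thesis using r(1) assms(2) unfolding omega_limit_def by blast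
qed

lemma omega_nonempty:
  assumes "compact X" "f ` X \<subseteq> X" "x \<in> X"
  shows "omega_limit X f x \<noteq> {}"
proof -
  obtain q l where "strict_mono q" "l \<in> X" "(\<lambda>i. (f ^^ q i) x) \<longlonglongrightarrow> l"
    using subseq_lim[OF assms(1), of "\<lambda>m. (f^^m) x" UNIV] orbit_in[OF assms(3,2)] by auto
  then show ?thesis unfolding omega_limit_def by blast
qed

lemma lim_in_omega:
  "strict_mono q \<Longrightarrow> l \<in> X \<Longrightarrow> (\<lambda>i. (f ^^ q i) x) \<longlonglongrightarrow> l \<Longrightarrow> l \<in> omega_limit X f x"
  unfolding omega_limit_def by blast

lemma lim_not_in_open:
  assumes "s \<longlonglongrightarrow> l" "open U" "l \<in> U" "\<And>i. s i \<notin> U"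
  shows False
proof -
  have "eventually (\<lambda>i. s i \<in> U) sequentially" using topological_tendstoD[OF assms(1-3)] .
  then show False using assms(4) by (simp add: eventually_sequentially)
qed

lemma shark:
  assumes X: "compact X" "continuous_on X f" "f ` X \<subseteq> X" "x \<in> X"
    and W_def: "W = omega_limit X f x"
    and G: "G \<subseteq> W" "G \<noteq> {}" "closedin (top_of_set W) G"
      "openin (top_of_set W) G" "f ` G \<subseteq> G"
  shows "G = W"
proof (rule ccontr)
  define s where "s m = (f^^m) x" for m
  have sX: "s m \<in> X" for m using orbit_in[OF X(4,3)] s_def by simp
  assume "G \<noteq> W"
  define H where "H = W - G"
  have "H \<noteq> {}" using G(1) \<open>G \<noteq> W\<close> H_def by blast
  have clX: "closed X" using X(1) compact_imp_closed by blast
  have clW: "closed W" unfolding W_def using omega_closed[OF clX] .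
  have WX: "W \<subseteq> X" unfolding W_def omega_limit_def by blast
  have cW: "compact W" using clW WX X(1) compact_Int_closed
    by (metis inf.absorb_iff2)
  have "closed G" using G(3) clW closedin_closed_trans by blast
  have "closedin (top_of_set W) H" unfolding H_def using G(4)
    by (simp add: closedin_diff)
  then have "closed H" using clW closedin_closed_trans by blast
  have cG: "compact G" using \<open>closed G\<close> G(1) cW compact_Int_closed by (metis inf.absorb_iff2)
  have cH: "compact H" using \<open>closed H\<close> cW H_def compact_Int_closed by (metis Diff_subset inf.absorb_iff2)
  obtain U V where UV: "open U" "open V" "G \<subseteq> U" "H \<subseteq> V" "U \<inter> V = {}"
    using Hausdorff_space_compact_separation[of euclidean G H] cG cH H_def
    by (auto simp: disjnt_def)
  have WUV: "W \<subseteq> U \<union> V" using UV H_def by blast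
  have "\<exists>N. \<forall>m\<ge>N. s m \<in> U \<union> V"
  proof (rule ccontr)
    assume "\<not> ?thesis"
    then have "\<forall>N. \<exists>m\<ge>N. m \<in> {m. s m \<notin> U \<union> V}" by auto
    then have inf: "infinite {m. s m \<notin> U \<union> V}" by (metis infinite_nat_iff_unbounded_le)
    obtain q :: "nat \<Rightarrow> nat" and l where q: "strict_mono q" "\<forall>i. q i \<in> {m. s m \<notin> U \<union> V}" "l \<in> X"
      "(\<lambda>i. s (q i)) \<longlonglongrightarrow> l"
      using subseq_lim[of X s, OF X(1) sX inf] by blast
    then have "l \<in> W" using lim_in_omega[of q l X f x] unfolding W_def s_def by blast
    have o: "open (U \<union> V)" using UV by auto
    have "l \<in> U \<union> V" using WUV \<open>l \<in> W\<close> by auto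
    moreover have "\<And>i. s (q i) \<notin> U \<union> V" using q(2) by auto
    ultimately show False using lim_not_in_open[OF q(4) o] by blast
  qed
  then obtain N where N: "\<And>m. m \<ge> N \<Longrightarrow> s m \<in> U \<union> V" by blast
  have freq: "\<exists>m\<ge>M. s m \<in> A" if A: "open A" "A \<inter> W \<noteq> {}" for A M
  proof -
    obtain y where y: "y \<in> A" "y \<in> W" using A(2) by blast
    obtain e where "e > 0" "ball y e \<subseteq> A" using A(1) y(1) open_contains_ball by blast
    then obtain m where "m \<ge> M" "dist (s m) y < e"
      using omega_freq[of y X f x] y(2) unfolding W_def s_def by blast
    then show ?thesis using \<open>ball y e \<subseteq> A\<close> by (auto simp: dist_commute)
  qed
  have fU: "\<exists>m\<ge>M. s m \<in> U" for M using freq[OF UV(1)] G(1,2) UV(3) by blast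
  have fV: "\<exists>m\<ge>M. s m \<in> V" for M using freq[OF UV(2)] \<open>H \<noteq> {}\<close> UV(4) H_def by blast
  have trans: "\<exists>m\<ge>M. s m \<in> U \<and> s (Suc m) \<in> V" for M
  proof (rule ccontr)
    assume nt: "\<not> ?thesis"
    obtain a where a: "a \<ge> max M N" "s a \<in> U" using fU by blast
    have allU: "s (a + k) \<in> U" for k
    proof (induction k)
      case 0 then show ?case using a by simp
    next
      case (Suc k)
      have "s (Suc (a + k)) \<notin> V" using nt Suc a by auto
      moreover have "s (Suc (a + k)) \<in> U \<union> V" using N a by auto
      ultimately show ?case by simp
    qed
    obtain b where b: "b \<ge> a" "s b \<in> V" using fV by blast
    have "s b \<in> U" using allU[of "b - a"] b(1) by simp
    then show False using b(2) UV(5) by blast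
  qed
  then have "\<forall>M. \<exists>m\<ge>M. m \<in> {m. s m \<in> U \<and> s (Suc m) \<in> V}" by auto
  then have inf: "infinite {m. s m \<in> U \<and> s (Suc m) \<in> V}" by (metis infinite_nat_iff_unbounded_le)
  obtain q :: "nat \<Rightarrow> nat" and l where q: "strict_mono q" "\<forall>i. q i \<in> {m. s m \<in> U \<and> s (Suc m) \<in> V}" "l \<in> X"
      "(\<lambda>i. s (q i)) \<longlonglongrightarrow> l"
    using subseq_lim[of X s, OF X(1) sX inf] by blast
  then have lW: "l \<in> W" using lim_in_omega[of q l X f x] unfolding W_def s_def by blast
  have lG: "l \<in> G"
  proof (rule ccontr)
    assume "l \<notin> G"
    then have "l \<in> V" using lW H_def UV(4) by blast
    then show False using lim_not_in_open[OF q(4) UV(2)] q(2) UV(5) by blast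
  qed
  have sl: "(\<lambda>i. s (Suc (q i))) \<longlonglongrightarrow> f l"
    using shift_lim[OF X(2-4) q(3), of q] q(4) unfolding s_def by blast
  have "f l \<in> U" using lG G(5) UV(3) by blast
  then show False using lim_not_in_open[OF sl UV(1)] q(2) UV(5) by blast
qed

lemma orbit_card_dvd:
  fixes g :: "nat \<Rightarrow> 'b" and \<sigma> :: "'b \<Rightarrow> 'b"
  assumes gS: "\<And>j. g (Suc j) = \<sigma> (g j)" and inj: "\<And>a b. \<sigma> (g a) = \<sigma> (g b) \<Longrightarrow> g a = g b"
    and gn: "g n = g 0" and n: "n \<ge> 1"
  shows "card (g ` {..<n}) dvd n"
proof -
  define P where "P k \<longleftrightarrow> 0 < k \<and> g k = g 0" for k
  have Pn: "P n" using gn n P_def by simp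
  define k where "k = (LEAST k. P k)"
  have Pk: "P k" using LeastI[of P n] Pn k_def by simp
  have kmin: "\<And>j. P j \<Longrightarrow> k \<le> j" unfolding k_def by (rule Least_le)
  have k0: "0 < k" "g k = g 0" using Pk P_def by auto
  have kn: "k \<le> n" using kmin Pn .
  have fwd: "g a = g b \<Longrightarrow> g (a + m) = g (b + m)" for a b m by (induction m) (auto simp: gS)
  have bwd: "g (a + m) = g (b + m) \<Longrightarrow> g a = g b" for a b m
  proof (induction m)
    case 0 then show ?case by simp
  next
    case (Suc m)
    then have "\<sigma> (g (a + m)) = \<sigma> (g (b + m))" by (simp add: gS)
    then show ?case using inj Suc.IH by blast
  qed
  have per: "g m = g (m mod k)" for m
  proof (induction m rule: less_induct)
    case (less m)
    show ?case
    proof (cases "m < k")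
      case True then show ?thesis by simp
    next
      case False
      have "g (k + (m - k)) = g (0 + (m - k))" using fwd[of k 0 "m-k"] k0(2) by simp
      then have "g m = g (m - k)" using False by simp
      also have "\<dots> = g ((m-k) mod k)" using less k0(1) False by simp
      also have "(m-k) mod k = m mod k" using False by (simp add: le_mod_geq)
      finally show ?thesis .
    qed
  qed
  have lt: "g d \<noteq> g 0" if "0 < d" "d < k" for d
  proof
    assume e: "g d = g 0"
    have "P d" unfolding P_def using that(1) e by blast
    then show False using kmin[of d] that(2) by linarith
  qed
  have injk: "inj_on g {..<k}"
  proof (rule inj_onI)
    fix a b assume ab: "a \<in> {..<k}" "b \<in> {..<k}" "g a = g b"
    show "a = b"
    proof (rule ccontr)
      assume "a \<noteq> b"
      then consider "a < b" | "b < a" by linarith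
      then show False
      proof cases
        case 1
        have "g (0 + a) = g ((b - a) + a)" using ab 1 by simp
        then have "g 0 = g (b - a)" by (rule bwd)
        moreover have "0 < b - a" "b - a < k" using 1 ab by auto
        ultimately show False using lt[of "b-a"] by metis
      next
        case 2
        have "g (0 + b) = g ((a - b) + b)" using ab 2 by simp
        then have "g 0 = g (a - b)" by (rule bwd)
        moreover have "0 < a - b" "a - b < k" using 2 ab by auto
        ultimately show False using lt[of "a-b"] by metis
      qed
    qed
  qed
  have img: "g ` {..<n} = g ` {..<k}"
  proof
    show "g ` {..<n} \<subseteq> g ` {..<k}"
    proof
      fix y assume "y \<in> g ` {..<n}"
      then obtain m where "y = g m" by blast
      then have "y = g (m mod k)" using per by simp
      moreover have "m mod k < k" using k0(1) by simp
      ultimately show "y \<in> g ` {..<k}" by blast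
    qed
    show "g ` {..<k} \<subseteq> g ` {..<n}" using kn by auto
  qed
  have cardk: "card (g ` {..<n}) = k" using img card_image[OF injk] by simp
  have "n mod k = 0"
  proof (rule ccontr)
    assume "n mod k \<noteq> 0"
    moreover have "g (n mod k) = g 0" using per[of n] gn by metis
    moreover have "n mod k < k" using k0(1) by simp
    ultimately show False using lt[of "n mod k"] by simp
  qed
  then show ?thesis using cardk by (simp add: mod_eq_0_iff_dvd)
qed

lemma sep_component:
  fixes W :: "'a::metric_space set"
  assumes "compact W" "c \<in> W" "y \<in> W" "y \<notin> connected_component_set W c"
  shows "\<exists>T. closedin (top_of_set W) T \<and> openin (top_of_set W) T \<and> c \<in> T \<and> y \<notin> T"
proof -
  have cs: "compact_space (top_of_set W)" using assms(1) by (simp add: compact_space_subtopology)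
  have hs: "Hausdorff_space (top_of_set W)" by (simp add: Hausdorff_space_subtopology)
  have q: "quasi_component_of (top_of_set W) c = connected_component_of (top_of_set W) c"
    by (rule quasi_eq_connected_component_of) (use cs hs in blast)
  have "\<not> connected_component_of (top_of_set W) c y"
  proof
    assume "connected_component_of (top_of_set W) c y"
    then obtain T where T: "connectedin (top_of_set W) T" "c \<in> T" "y \<in> T"
      unfolding connected_component_of_def by blast
    then have "connected T" "T \<subseteq> W" unfolding connectedin_subtopology by auto
    then have "connected_component W c y" unfolding connected_component_def using T(2,3) by blast
    then show False using assms(4) by simp
  qed
  then have "\<not> quasi_component_of (top_of_set W) c y" using q by simp
  then have "\<exists>T. c \<in> T \<and> closedin (top_of_set W) T \<and> openin (top_of_set W) T \<and> y \<notin> T"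
    using assms(2,3) unfolding quasi_component_of by simp
  then obtain T where "c \<in> T" "closedin (top_of_set W) T" "openin (top_of_set W) T" "y \<notin> T"
    by (elim exE conjE)
  then show ?thesis by (intro exI[of _ T]) simp
qed

lemma funpow_split: "j \<le> n \<Longrightarrow> (f^^n) a = (f^^j) ((f^^(n-j)) a)"
proof -
  assume "j \<le> n"
  then have "n = j + (n - j)" by simp
  then have "(f^^n) a = (f^^(j + (n-j))) a" by simp
  then show ?thesis by (simp only: funpow_add comp_apply)
qed

lemma funpow_split2: "j \<le> n \<Longrightarrow> (f^^n) a = (f^^(n-j)) ((f^^j) a)"
  using funpow_split[of "n-j" n f a] by simp

lemma funpow_pred: "n \<ge> 1 \<Longrightarrow> (f^^n) a = (f^^(n-1)) (f a)"
  using funpow_split2[of 1 n f a] by simp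

theorem corollary1p2:
  fixes X :: "'a::metric_space set" and f :: "'a \<Rightarrow> 'a" and n :: nat and x :: 'a
  assumes "compact X" and "continuous_on X f" and "f ` X \<subseteq> X"
    and "n \<ge> 1" and "x \<in> X"
    and "omega_limit X f x \<subseteq> Fix X (f ^^ n)"
  shows "card (components (omega_limit X f x)) dvd n"
proof -
  define W where "W = omega_limit X f x"
  have clX: "closed X" using assms(1) compact_imp_closed by blast
  have clW: "closed W" unfolding W_def using omega_closed[OF clX] .
  have WX: "W \<subseteq> X" unfolding W_def omega_limit_def by blast
  have cW: "compact W" using clW WX assms(1) compact_Int_closed by (metis inf.absorb_iff2)
  have Wne: "W \<noteq> {}" unfolding W_def using omega_nonempty[OF assms(1,3,5)] .
  have fW: "f y \<in> W" if "y \<in> W" for y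
    using omega_fw[OF assms(2,3,5)] that unfolding W_def by blast
  have fWs: "f ` W \<subseteq> W" using fW by blast
  have fixn: "(f^^n) w = w" if "w \<in> W" for w
    using assms(6) that unfolding W_def Fix_def by blast
  have fkW: "(f^^k) w \<in> W" if "w \<in> W" for w k
    using orbit_in[of w W f k] that fWs by blast
  have contk: "continuous_on W (f^^k)" for k
  proof (induction k)
    case 0 then show ?case by (simp add: continuous_on_id)
  next
    case (Suc k)
    have "continuous_on ((f^^k) ` W) f"
      using continuous_on_subset[OF assms(2)] fkW WX by blast
    then have "continuous_on W (f \<circ> (f^^k))" using continuous_on_compose[OF Suc.IH] by blast
    then show ?case by simp
  qed
  have injf: "inj_on f W"
  proof (rule inj_onI)
    fix a b assume ab: "a \<in> W" "b \<in> W" "f a = f b"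
    have "(f^^n) a = (f^^(n-1)) (f a)" using funpow_pred[OF assms(4)] .
    also have "\<dots> = (f^^(n-1)) (f b)" using ab(3) by simp
    also have "\<dots> = (f^^n) b" using funpow_pred[OF assms(4), of f b] by simp
    finally show "a = b" using fixn ab(1,2) by simp
  qed
  have cover: "\<exists>i<n. (f^^i) w \<in> V"
    if V: "closedin (top_of_set W) V" "openin (top_of_set W) V" "V \<noteq> {}" and w: "w \<in> W" for V w
  proof -
    define G where "G = \<Union> ((\<lambda>i. W \<inter> (f^^i) -` V) ` {..<n})"
    have VW: "V \<subseteq> W" using V(1) closedin_imp_subset by blast
    have mapsto: "(f^^i) \<in> W \<rightarrow> W" for i using fkW by blast
    have GW: "G \<subseteq> W" unfolding G_def by blast
    have VG: "V \<subseteq> G"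
    proof
      fix v assume "v \<in> V"
      then have "v \<in> W \<inter> (f^^0) -` V" using VW by auto
      moreover have "0 \<in> {..<n}" using assms(4) by simp
      ultimately show "v \<in> G" unfolding G_def by blast
    qed
    have Gne: "G \<noteq> {}" using VG V(3) by blast
    have Gcl: "closedin (top_of_set W) G" unfolding G_def
      apply (rule closedin_Union)
       apply simp
      using continuous_closedin_preimage_gen[OF contk mapsto V(1)] by blast
    have Gop: "openin (top_of_set W) G" unfolding G_def
      apply (rule openin_Union)
      using continuous_openin_preimage[OF contk mapsto V(2)] by blast
    have fG: "f ` G \<subseteq> G"
    proof
      fix z assume "z \<in> f ` G"
      then obtain y where y: "y \<in> G" "z = f y" by blast
      then obtain i where i: "i < n" "y \<in> W" "(f^^i) y \<in> V" unfolding G_def by blast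
      have zW: "z \<in> W" using y(2) i(2) fW by simp
      show "z \<in> G"
      proof (cases i)
        case 0
        then have "y \<in> V" using i by simp
        have "(f^^(n-1)) z = (f^^n) y" using funpow_pred[OF assms(4), of f y] y(2) by simp
        also have "\<dots> = y" using fixn i(2) by simp
        finally have "(f^^(n-1)) z \<in> V" using \<open>y \<in> V\<close> by simp
        moreover have "n - 1 < n" using assms(4) by simp
        ultimately show ?thesis unfolding G_def using zW by blast
      next
        case (Suc j)
        have "(f^^i) y = (f^^(i-1)) (f y)" using funpow_pred[of i f y] Suc by simp
        then have "(f^^j) z = (f^^i) y" using Suc y(2) by simp
        then have "(f^^j) z \<in> V" using i(3) by simp
        moreover have "j < n" using Suc i(1) by simp
        ultimately show ?thesis unfolding G_def using zW by blast
      qed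
    qed
    have "G = W" using shark[OF assms(1,2,3,5) W_def GW Gne Gcl Gop fG] .
    then have "w \<in> G" using w by simp
    then show ?thesis unfolding G_def by blast
  qed
  have hit: "\<exists>i<n. (f^^i) w \<in> connected_component_set W c" if c: "c \<in> W" and w: "w \<in> W" for c w
  proof (rule ccontr)
    assume nh: "\<not> ?thesis"
    have "\<forall>i\<in>{..<n}. \<exists>T. closedin (top_of_set W) T \<and> openin (top_of_set W) T \<and> c \<in> T \<and> (f^^i) w \<notin> T"
    proof
      fix i assume "i \<in> {..<n}"
      then have "(f^^i) w \<notin> connected_component_set W c" using nh by blast
      then show "\<exists>T. closedin (top_of_set W) T \<and> openin (top_of_set W) T \<and> c \<in> T \<and> (f^^i) w \<notin> T"
        using sep_component[OF cW c fkW[OF w]] by blast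
    qed
    then obtain T where T: "\<And>i. i \<in> {..<n} \<Longrightarrow> closedin (top_of_set W) (T i) \<and> openin (top_of_set W) (T i) \<and> c \<in> T i \<and> (f^^i) w \<notin> T i"
      by metis
    define V where "V = \<Inter> (T ` {..<n})"
    have "0 \<in> {..<n}" using assms(4) by simp
    then have ne: "T ` {..<n} \<noteq> {}" by blast
    have Vcl: "closedin (top_of_set W) V" unfolding V_def
      by (rule closedin_Inter[OF ne]) (use T in blast)
    have Vop: "openin (top_of_set W) V" unfolding V_def
      by (rule openin_Inter) (use ne T in auto)
    have "c \<in> V" unfolding V_def using T by blast
    then obtain i where "i < n" "(f^^i) w \<in> V" using cover[OF Vcl Vop _ w] by blast
    then show False unfolding V_def using T by blast
  qed
  have core: "connected_component_set W w = (f^^j) ` C"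
    if c: "c \<in> W" and Cd: "C = connected_component_set W c" and j: "j \<le> n"
      and w: "w \<in> (f^^j) ` C" for c C j w
  proof
    have CW: "C \<subseteq> W" using Cd connected_component_subset by simp
    have Cc: "connected C" using Cd connected_connected_component by simp
    have wW: "w \<in> W" using w CW fkW by blast
    have "connected ((f^^j) ` C)"
      using connected_continuous_image[OF continuous_on_subset[OF contk CW] Cc] .
    moreover have "(f^^j) ` C \<subseteq> W" using CW fkW by blast
    ultimately show "(f^^j) ` C \<subseteq> connected_component_set W w"
      by (rule connected_component_maximal[OF w])
    obtain c' where c': "c' \<in> C" "w = (f^^j) c'" using w by blast
    define D where "D = connected_component_set W w"
    have DW: "D \<subseteq> W" unfolding D_def by (rule connected_component_subset)
    have Dc: "connected D" unfolding D_def by (rule connected_connected_component)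
    have wD: "w \<in> D" unfolding D_def using wW by simp
    have "(f^^(n-j)) w = (f^^(n-j)) ((f^^j) c')" using c'(2) by simp
    also have "\<dots> = (f^^n) c'" using funpow_split2[OF j, of f c'] by simp
    also have "\<dots> = c'" using fixn c'(1) CW by blast
    finally have e: "(f^^(n-j)) w = c'" .
    have "connected ((f^^(n-j)) ` D)"
      using connected_continuous_image[OF continuous_on_subset[OF contk DW] Dc] .
    moreover have "(f^^(n-j)) ` D \<subseteq> W" using DW fkW by blast
    moreover have "c' \<in> (f^^(n-j)) ` D" using wD e by blast
    ultimately have "(f^^(n-j)) ` D \<subseteq> connected_component_set W c'"
      by (intro connected_component_maximal)
    also have "connected_component_set W c' = C"
      using connected_component_eq[of c' W c] c'(1) Cd by simp
    finally have sub: "(f^^(n-j)) ` D \<subseteq> C" .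
    show "connected_component_set W w \<subseteq> (f^^j) ` C"
    proof
      fix d assume "d \<in> connected_component_set W w"
      then have d: "d \<in> D" unfolding D_def .
      then have dW: "d \<in> W" using DW by blast
      have "d = (f^^n) d" using fixn[OF dW] by simp
      also have "\<dots> = (f^^j) ((f^^(n-j)) d)" using funpow_split[OF j] .
      finally have "d = (f^^j) ((f^^(n-j)) d)" .
      moreover have "(f^^(n-j)) d \<in> C" using sub d by blast
      ultimately show "d \<in> (f^^j) ` C" by blast
    qed
  qed
  obtain c where c: "c \<in> W" using Wne by blast
  define C where "C = connected_component_set W c"
  have CW: "C \<subseteq> W" unfolding C_def by (rule connected_component_subset)
  have cC: "c \<in> C" unfolding C_def using c by simp
  define g where "g j = (f^^j) ` C" for j
  have comps: "components W = g ` {..<n}"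
  proof
    show "components W \<subseteq> g ` {..<n}"
    proof
      fix D assume "D \<in> components W"
      then obtain w where w: "w \<in> W" "D = connected_component_set W w" unfolding components_iff by blast
      obtain i where i: "i < n" "(f^^i) w \<in> C" using hit[OF c w(1)] unfolding C_def by blast
      show "D \<in> g ` {..<n}"
      proof (cases i)
        case 0
        then have "w \<in> (f^^0) ` C" using i by simp
        then have "D = g 0" using core[OF c C_def, of 0 w] w(2) unfolding g_def by simp
        then show ?thesis using assms(4) by auto
      next
        case (Suc i')
        have "w = (f^^n) w" using fixn w(1) by simp
        also have "\<dots> = (f^^(n-i)) ((f^^i) w)" using funpow_split2[of i n f w] i(1) by simp
        finally have "w \<in> (f^^(n-i)) ` C" using i(2) by blast
        then have "D = g (n-i)" using core[OF c C_def, of "n-i" w] w(2) unfolding g_def by simp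
        moreover have "n - i < n" using Suc i(1) by simp
        ultimately show ?thesis by blast
      qed
    qed
    show "g ` {..<n} \<subseteq> components W"
    proof
      fix D assume "D \<in> g ` {..<n}"
      then obtain j where j: "j < n" "D = g j" by blast
      have "(f^^j) c \<in> g j" unfolding g_def using cC by blast
      then have "connected_component_set W ((f^^j) c) = g j"
        using core[OF c C_def, of j "(f^^j) c"] j(1) unfolding g_def by simp
      moreover have "(f^^j) c \<in> W" using fkW c by blast
      ultimately show "D \<in> components W" using j(2) componentsI by metis
    qed
  qed
  have gS: "g (Suc j) = f ` (g j)" for j unfolding g_def by (simp add: image_comp)
  have gW: "g j \<subseteq> W" for j unfolding g_def using CW fkW by blast
  have ginj: "g a = g b" if "f ` (g a) = f ` (g b)" for a b
    using inj_on_image_eq_iff[OF injf gW gW] that by blast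
  have gn: "g n = g 0" unfolding g_def
  proof -
    have "(f^^n) ` C = C" using fixn CW by (force simp: image_iff)
    then show "(f^^n) ` C = (f^^0) ` C" by simp
  qed
  have "card (g ` {..<n}) dvd n" using orbit_card_dvd[of g "(`) f" n] gS ginj gn assms(4) by blast
  then show ?thesis using comps W_def by simp
qed

end
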